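(* Let $A$ be a finite set and let $<_1$ and $<_2$ be semi-linear strict partial orders on $A$. If the transitive closure $<_1\bar\cup<_2$ of the union of the relations $<_1$ and $<_2$ is irreflexive, then it is a semi-linear strict partial order.
   Context: A strict partial order on $A$ is a transitive irreflexive relation. A strict partial order $<$ is semi-linear if there is a surjective function $h:A\to\{1,\dots,l\}$ (for some $l$) such that $a<b$ iff $h(a)<h(b)$. *)

theory Defs
  imports Main
begin

definition strict_partial_order_on :: "'a set \<Rightarrow> 'a rel \<Rightarrow> bool" where
  "strict_partial_order_on A r \<longleftrightarrow> r \<subseteq> A \<times> A \<and> trans r \<and> irrefl r"

definition semi_linear_on :: "'a set \<Rightarrow> 'a rel \<Rightarrow> bool" where
  "semi_linear_on A r \<longleftrightarrow> strict_partial_order_on A r \<and>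
     (\<exists>(l::nat) (h::'a \<Rightarrow> nat). h ` A = {1..l} \<and>
        (\<forall>a\<in>A. \<forall>b\<in>A. (a, b) \<in> r \<longleftrightarrow> h a < h b))"

end

theory Submission
  imports Defs
begin

lemma rank_exists:
  assumes "finite A" "r \<subseteq> A \<times> A" "trans r" "irrefl r"
    and nt: "\<And>a b c. (a,b) \<in> r \<Longrightarrow> c \<in> A \<Longrightarrow> (a,c) \<in> r \<or> (c,b) \<in> r"
  shows "\<exists>(l::nat) (h::'a \<Rightarrow> nat). h ` A = {1..l} \<and>
        (\<forall>a\<in>A. \<forall>b\<in>A. (a, b) \<in> r \<longleftrightarrow> h a < h b)"
  using assms
proof (induction "card A" arbitrary: A r rule: less_induct)
  case less
  show ?case
  proof (cases "A = {}")
    case True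
    then show ?thesis by (intro exI[of _ 0] exI[of _ "\<lambda>_. 0"]) simp
  next
    case False
    have fr: "finite r" using less.prems(1,2) by (simp add: finite_subset)
    have "acyclic r" using less.prems(3,4) by (simp add: acyclic_irrefl)
    then have wf: "wf (r\<inverse>)" by (rule finite_acyclic_wf_converse[OF fr])
    obtain m where m: "m \<in> A" "\<And>y. (y, m) \<in> r\<inverse> \<Longrightarrow> y \<notin> A"
      using wfE_min'[OF wf False] by blast
    define M where "M = {a\<in>A. \<forall>b\<in>A. (a,b) \<notin> r}"
    have mM: "m \<in> M"
      unfolding M_def
    proof (intro CollectI conjI ballI m(1))
      fix b assume "b \<in> A"
      show "(m, b) \<notin> r"
      proof
        assume "(m, b) \<in> r"
        then have "(b, m) \<in> r\<inverse>" by (rule converseI)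
        from m(2)[OF this] \<open>b \<in> A\<close> show False by (rule notE)
      qed
    qed
    define A' where "A' = A - M"
    define r' where "r' = r \<inter> A' \<times> A'"
    have lt: "card A' < card A"
    proof (rule psubset_card_mono[OF less.prems(1)])
      show "A' \<subset> A" unfolding A'_def using mM m(1) by blast
    qed
    have "\<exists>(l::nat) (h::'a \<Rightarrow> nat). h ` A' = {1..l} \<and>
        (\<forall>a\<in>A'. \<forall>b\<in>A'. (a, b) \<in> r' \<longleftrightarrow> h a < h b)"
    proof (rule less.hyps[OF lt])
      show "finite A'" using less.prems(1) unfolding A'_def by simp
      show "r' \<subseteq> A' \<times> A'" unfolding r'_def by auto
      show "trans r'" using less.prems(3) unfolding r'_def by (rule trans_Restr)
      show "irrefl r'" using less.prems(4) unfolding r'_def irrefl_def by blast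
      fix a b c assume ab: "(a,b) \<in> r'" and c: "c \<in> A'"
      then have "(a,b) \<in> r" "c \<in> A" "a \<in> A'" "b \<in> A'" unfolding r'_def A'_def by auto
      then have "(a,c) \<in> r \<or> (c,b) \<in> r" using less.prems(5) by blast
      then show "(a,c) \<in> r' \<or> (c,b) \<in> r'" using c \<open>a \<in> A'\<close> \<open>b \<in> A'\<close> unfolding r'_def by blast
    qed
    then obtain l :: nat and h :: "'a \<Rightarrow> nat" where h: "h ` A' = {1..l}" "\<forall>a\<in>A'. \<forall>b\<in>A'. (a, b) \<in> r' \<longleftrightarrow> h a < h b"
      by blast
    define g where "g a = (if a \<in> M then Suc l else h a)" for a
    have "g ` A = {1..Suc l}"
    proof
      show "g ` A \<subseteq> {1..Suc l}" using h(1) unfolding g_def A'_def by fastforce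
      show "{1..Suc l} \<subseteq> g ` A"
      proof
        fix x assume x: "x \<in> {1..Suc l}"
        show "x \<in> g ` A"
        proof (cases "x = Suc l")
          case True then show ?thesis using mM m(1) unfolding g_def by force
        next
          case False then have "x \<in> h ` A'" using x h(1) by auto
          then obtain y where "y \<in> A'" "x = h y" by blast
          then show ?thesis unfolding g_def A'_def by force
        qed
      qed
    qed
    moreover have "\<forall>a\<in>A. \<forall>b\<in>A. (a, b) \<in> r \<longleftrightarrow> g a < g b"
    proof (intro ballI)
      fix a b assume a: "a \<in> A" and b: "b \<in> A"
      show "(a, b) \<in> r \<longleftrightarrow> g a < g b"
      proof (cases "a \<in> M")
        case True
        have n: "(a,b) \<notin> r" using True b unfolding M_def by auto
        have "g b \<le> Suc l"
        proof (cases "b \<in> M")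
          case False
          then have "h b \<in> {1..l}" using h(1) b unfolding A'_def by blast
          then show ?thesis using False unfolding g_def by simp
        qed (simp add: g_def)
        then show ?thesis using n True unfolding g_def by simp
      next
        case aM: False
        then obtain c where c: "c \<in> A" "(a,c) \<in> r" using a unfolding M_def by auto
        have ha: "h a \<le> l" using h(1) a aM unfolding A'_def by auto
        show ?thesis
        proof (cases "b \<in> M")
          case True
          have "(a,b) \<in> r" using less.prems(5)[OF c(2) b] True unfolding M_def using c by auto
          then show ?thesis using True aM ha unfolding g_def by auto
        next
          case False
          then show ?thesis using h(2) a b aM unfolding g_def r'_def A'_def by auto
        qed
      qed
    qed
    ultimately show ?thesis by (intro exI[of _ "Suc l"] exI[of _ g] conjI)
  qed
qed

theorem lemma4p2:
  fixes A :: "'a set" and r1 r2 :: "'a rel"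
  assumes "finite A"
    and "semi_linear_on A r1"
    and "semi_linear_on A r2"
    and "irrefl ((r1 \<union> r2)\<^sup>+)"
  shows "semi_linear_on A ((r1 \<union> r2)\<^sup>+)"
proof -
  obtain l1 h1 where h1: "r1 \<subseteq> A \<times> A" "\<forall>a\<in>A. \<forall>b\<in>A. (a, b) \<in> r1 \<longleftrightarrow> h1 a < (h1 b::nat)"
    using assms(2) unfolding semi_linear_on_def strict_partial_order_on_def by blast
  obtain l2 h2 where h2: "r2 \<subseteq> A \<times> A" "\<forall>a\<in>A. \<forall>b\<in>A. (a, b) \<in> r2 \<longleftrightarrow> h2 a < (h2 b::nat)"
    using assms(3) unfolding semi_linear_on_def strict_partial_order_on_def by blast
  let ?R = "(r1 \<union> r2)\<^sup>+"
  have sub: "?R \<subseteq> A \<times> A" using h1(1) h2(1) by (simp add: trancl_subset_Sigma)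
  have nt: "(a,c) \<in> ?R \<or> (c,b) \<in> ?R" if ab: "(a,b) \<in> ?R" and c: "c \<in> A" for a b c
  proof -
    obtain x where x: "(a,x) \<in> r1 \<union> r2" "(x,b) \<in> (r1 \<union> r2)\<^sup>*"
      using tranclD[OF ab] by blast
    have "(a,c) \<in> r1 \<union> r2 \<or> (c,x) \<in> r1 \<union> r2"
    proof (cases "(a,x) \<in> r1")
      case True
      then have "a \<in> A" "x \<in> A" using h1(1) by auto
      have hax: "h1 a < h1 x" using True h1(2) \<open>a \<in> A\<close> \<open>x \<in> A\<close> by blast
      show ?thesis
      proof (cases "h1 a < h1 c")
        case True
        then have "(a,c) \<in> r1" using h1(2) \<open>a \<in> A\<close> c by blast
        then show ?thesis by blast
      next
        case False
        then have "h1 c < h1 x" using hax by linarith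
        then have "(c,x) \<in> r1" using h1(2) \<open>x \<in> A\<close> c by blast
        then show ?thesis by blast
      qed
    next
      case False
      then have r: "(a,x) \<in> r2" using x by auto
      then have "a \<in> A" "x \<in> A" using h2(1) by auto
      have hax: "h2 a < h2 x" using r h2(2) \<open>a \<in> A\<close> \<open>x \<in> A\<close> by blast
      show ?thesis
      proof (cases "h2 a < h2 c")
        case True
        then have "(a,c) \<in> r2" using h2(2) \<open>a \<in> A\<close> c by blast
        then show ?thesis by blast
      next
        case False
        then have "h2 c < h2 x" using hax by linarith
        then have "(c,x) \<in> r2" using h2(2) \<open>x \<in> A\<close> c by blast
        then show ?thesis by blast
      qed
    qed
    then show ?thesis using x(2) by (meson r_into_trancl rtrancl_into_trancl2)
  qed
  have ex: "\<exists>(l::nat) (h::'a \<Rightarrow> nat). h ` A = {1..l} \<and>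
        (\<forall>a\<in>A. \<forall>b\<in>A. (a, b) \<in> ?R \<longleftrightarrow> h a < h b)"
    by (rule rank_exists[OF assms(1) sub trans_trancl assms(4) nt])
  have "strict_partial_order_on A ?R"
    unfolding strict_partial_order_on_def using sub assms(4) trans_trancl by blast
  then show ?thesis unfolding semi_linear_on_def using ex by blast
qed

end
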